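(* Let $\beta\in\mathbb{N}=\{0,1,2,\dots\}$ and $\alpha\in\mathbb{D}\setminus\{0\}$. Let $\phi_\alpha(z)=\dfrac{\alpha-z}{1-\overline{\alpha}z}$ and, for each non-negative integer $n$, let $v_n:=C_{\phi_\alpha}^*z^n$, where $C_{\phi_\alpha}f=f\circ\phi_\alpha$ acts on $A^2_\beta$ and $^*$ denotes the adjoint in $A^2_\beta$. Then $\langle v_n,v_0\rangle=0$ whenever $n>2+\beta$.
   Context: $\mathbb{D}$ is the open unit disc. For $\beta>-1$, $A^2_\beta$ is the Hilbert space of analytic functions $f(z)=\sum_{n\ge0}\widehat f(n)z^n$ on $\mathbb{D}$ with inner product $\langle f,g\rangle=\sum_{n\ge0}\frac{n!\,\Gamma(2+\beta)}{\Gamma(n+2+\beta)}\widehat f(n)\overline{\widehat g(n)}$ (equivalently the $L^2$ inner product with respect to $(\beta+1)(1-|z|^2)^\beta dA(z)$). *)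

theory Defs
  imports "HOL-Complex_Analysis.Complex_Analysis"
begin

definition taylor_coeff :: "(complex \<Rightarrow> complex) \<Rightarrow> nat \<Rightarrow> complex" where
  "taylor_coeff f n = (deriv ^^ n) f 0 / of_nat (fact n)"

definition bergman_weight :: "real \<Rightarrow> nat \<Rightarrow> real" where
  "bergman_weight \<beta> n = fact n * Gamma (2 + \<beta>) / Gamma (real n + 2 + \<beta>)"

definition A2 :: "real \<Rightarrow> (complex \<Rightarrow> complex) set" where
  "A2 \<beta> = {f. f holomorphic_on ball 0 1 \<and>
     summable (\<lambda>n. bergman_weight \<beta> n * (cmod (taylor_coeff f n))\<^sup>2)}"

definition A2_inner :: "real \<Rightarrow> (complex \<Rightarrow> complex) \<Rightarrow> (complex \<Rightarrow> complex) \<Rightarrow> complex" where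
  "A2_inner \<beta> f g = (\<Sum>n. of_real (bergman_weight \<beta> n) * taylor_coeff f n * cnj (taylor_coeff g n))"

definition disc_aut :: "complex \<Rightarrow> complex \<Rightarrow> complex" where
  "disc_aut \<alpha> z = (\<alpha> - z) / (1 - cnj \<alpha> * z)"

definition comp_op :: "(complex \<Rightarrow> complex) \<Rightarrow> (complex \<Rightarrow> complex) \<Rightarrow> (complex \<Rightarrow> complex)" where
  "comp_op \<phi> f = f \<circ> \<phi>"

text \<open>Adjoint of C_phi in A^2_beta applied to g: the unique element v of A^2_beta
  (normalised to be 0 off the disc, so that it is unique as a HOL function) with
  <C_phi f, g> = <f, v> for all f in A^2_beta.\<close>
definition comp_adj :: "real \<Rightarrow> (complex \<Rightarrow> complex) \<Rightarrow> (complex \<Rightarrow> complex) \<Rightarrow> (complex \<Rightarrow> complex)" where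
  "comp_adj \<beta> \<phi> g = (THE v. v \<in> A2 \<beta> \<and> (\<forall>z. z \<notin> ball 0 1 \<longrightarrow> v z = 0) \<and>
      (\<forall>f\<in>A2 \<beta>. A2_inner \<beta> (comp_op \<phi> f) g = A2_inner \<beta> f v))"

end

theory Submission
  imports Defs
begin

definition iw :: "real \<Rightarrow> nat \<Rightarrow> real" where
  "iw b m = pochhammer (2 + b) m / fact m"

lemma iw_pos: "b \<ge> 0 \<Longrightarrow> iw b m > 0"
  unfolding iw_def by (intro divide_pos_pos pochhammer_pos) auto

lemma bw_iw: assumes "b \<ge> 0" shows "bergman_weight b m = 1 / iw b m"
proof -
  have "(2 + b) \<notin> \<int>\<^sub>\<le>\<^sub>0" using assms
    using nonpos_Ints_nonpos[of "2 + b"] by auto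
  then have "pochhammer (2 + b) m = Gamma (2 + b + of_nat m) / Gamma (2 + b)"
    by (rule pochhammer_Gamma)
  moreover have "Gamma (2 + b) > 0" using assms by (intro Gamma_real_pos) auto
  ultimately show ?thesis unfolding bergman_weight_def iw_def
    by (simp add: add_ac)
qed

lemma bw_pos: "b \<ge> 0 \<Longrightarrow> bergman_weight b m > 0"
  using bw_iw iw_pos by simp

lemma summable_iw:
  assumes "b \<ge> 0" "0 \<le> x" "x < 1"
  shows "summable (\<lambda>m. x ^ m * iw b m)"
proof (rule summable_ratio_test[where c = "(1 + x) / 2" and N = "nat \<lceil>2 * (2 + b) / (1 - x)\<rceil>"])
  show "(1 + x) / 2 < 1" using assms by simp
next
  fix m assume m: "m \<ge> nat \<lceil>2 * (2 + b) / (1 - x)\<rceil>"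
  have "real m \<ge> 2 * (2 + b) / (1 - x)" using m by linarith
  then have m2: "real m * (1 - x) \<ge> 2 * (2 + b)" using assms by (simp add: field_simps)
  have key: "x * (2 + b + real m) \<le> (1 + x) / 2 * (real m + 1)"
  proof -
    have "x * (2 + b) \<le> 2 + b" using assms by (simp add: mult_left_le_one_le)
    then show ?thesis using m2 assms by (simp add: algebra_simps)
  qed
  have iwS: "iw b (Suc m) = iw b m * (2 + b + real m) / (real m + 1)"
    unfolding iw_def by (simp add: pochhammer_Suc field_simps)
  have "norm (x ^ Suc m * iw b (Suc m)) = x ^ Suc m * iw b (Suc m)"
    using assms iw_pos[OF assms(1), of "Suc m"] by (simp add: abs_of_nonneg)
  also have "\<dots> = x ^ m * iw b m * (x * (2 + b + real m) / (real m + 1))"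
    by (simp add: iwS field_simps)
  also have "\<dots> \<le> x ^ m * iw b m * ((1 + x) / 2)"
  proof (rule mult_left_mono)
    show "x * (2 + b + real m) / (real m + 1) \<le> (1 + x) / 2"
      using key by (simp add: divide_le_eq)
    show "0 \<le> x ^ m * iw b m" using assms iw_pos[OF assms(1), of m] by simp
  qed
  also have "\<dots> = (1 + x) / 2 * norm (x ^ m * iw b m)"
    using assms iw_pos[OF assms(1), of m] by simp
  finally show "norm (x ^ Suc m * iw b (Suc m)) \<le> (1 + x) / 2 * norm (x ^ m * iw b m)" .
qed

lemma tc_sums:
  fixes g :: "complex \<Rightarrow> complex"
  assumes r: "r > 0" and s: "\<And>w. w \<in> ball 0 r \<Longrightarrow> (\<lambda>m. a m * w ^ m) sums g w"
  shows "taylor_coeff g m = a m"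
proof -
  define F where "F = Abs_fps a"
  have "summable (\<lambda>m. a m * (of_real (r/2)) ^ m)"
    using s[of "of_real (r/2)"] r by (auto simp: sums_iff)
  then have "conv_radius a \<ge> norm (of_real (r/2) :: complex)" by (rule conv_radius_geI)
  then have "fps_conv_radius F > 0"
  proof -
    have "ereal 0 < ereal (r/2)" using r by simp
    also have "\<dots> \<le> conv_radius a" using \<open>conv_radius a \<ge> _\<close> r by simp
    finally show ?thesis unfolding F_def fps_conv_radius_def by (simp add: zero_ereal_def)
  qed
  moreover have "eventually (\<lambda>z. eval_fps F z = g z) (nhds 0)"
  proof -
    have "\<forall>z\<in>ball 0 r. eval_fps F z = g z"
      using s unfolding F_def eval_fps_def by (auto simp: sums_iff)
    then show ?thesis using r unfolding eventually_nhds by (intro exI[of _ "ball 0 r"]) auto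
  qed
  ultimately have "g has_fps_expansion F" by (simp add: has_fps_expansion_def)
  from fps_nth_fps_expansion[OF this, of m] show ?thesis
    by (simp add: taylor_coeff_def F_def)
qed

lemma tc_power: "taylor_coeff (\<lambda>z. z ^ k) m = (if m = k then 1 else 0)"
  using fps_nth_fps_expansion[OF has_fps_expansion_fps_X_power[of k], of m]
  by (simp add: taylor_coeff_def)

lemma tc_cong:
  assumes "r > 0" "\<And>z. z \<in> ball 0 r \<Longrightarrow> f z = g z"
  shows "taylor_coeff f n = taylor_coeff g n"
proof -
  have "eventually (\<lambda>z. f z = g z) (nhds 0)"
    using assms unfolding eventually_nhds by (intro exI[of _ "ball 0 r"]) auto
  then show ?thesis unfolding taylor_coeff_def by (simp add: higher_deriv_cong_ev)
qed

lemma tc_series: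
  assumes "f holomorphic_on ball 0 1" "w \<in> ball 0 1"
  shows "(\<lambda>m. taylor_coeff f m * w ^ m) sums f w"
  using holomorphic_power_series[OF assms] by (simp add: taylor_coeff_def)

lemma tc_abs_summable:
  assumes "f holomorphic_on ball 0 1" "0 \<le> s" "s < 1"
  shows "summable (\<lambda>m. norm (taylor_coeff f m) * s ^ m)"
proof -
  have h: "norm (complex_of_real ((1+s)/2)) = (1+s)/2"
    by (subst norm_of_real) (use assms in auto)
  have "(\<lambda>m. taylor_coeff f m * of_real ((1+s)/2) ^ m) sums f (of_real ((1+s)/2))"
    using assms h by (intro tc_series) (auto simp del: of_real_add of_real_divide)
  then have "conv_radius (taylor_coeff f) \<ge> norm (of_real ((1+s)/2) :: complex)"
    by (intro conv_radius_geI) (auto simp: sums_iff)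
  then have "ereal (norm (of_real s :: complex)) < conv_radius (taylor_coeff f)"
  proof -
    have "ereal s < ereal ((1+s)/2)" using assms by simp
    also have "\<dots> \<le> conv_radius (taylor_coeff f)" using \<open>conv_radius _ \<ge> _\<close> h by simp
    finally show ?thesis using assms by simp
  qed
  from abs_summable_in_conv_radius[OF this] show ?thesis
    using assms by (simp add: norm_mult norm_power)
qed

lemma da_denom:
  assumes "\<alpha> \<in> ball 0 1" "z \<in> ball 0 1"
  shows "1 - cnj \<alpha> * z \<noteq> 0"
proof -
  have "norm (cnj \<alpha> * z) < 1"
    using assms by (simp add: norm_mult) (metis mult_strict_mono' norm_ge_zero mult_1_left)
  then show ?thesis by auto
qed

lemma da_in:
  assumes "\<alpha> \<in> ball 0 1" "z \<in> ball 0 1"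
  shows "norm (disc_aut \<alpha> z) < 1"
proof -
  have a: "Re \<alpha> ^ 2 + Im \<alpha> ^ 2 < 1" using assms(1)
    using abs_square_less_1[of "cmod \<alpha>"] by (simp add: cmod_power2)
  have zz: "Re z ^ 2 + Im z ^ 2 < 1" using assms(2)
    using abs_square_less_1[of "cmod z"] by (simp add: cmod_power2)
  have id: "(cmod (1 - cnj \<alpha> * z))^2 - (cmod (\<alpha> - z))^2 =
      (1 - (Re \<alpha> ^ 2 + Im \<alpha> ^ 2)) * (1 - (Re z ^ 2 + Im z ^ 2))"
    unfolding cmod_power2 by (simp add: algebra_simps power2_eq_square)
  have "(cmod (\<alpha> - z))^2 < (cmod (1 - cnj \<alpha> * z))^2"
    using id a zz by (smt (verit) mult_pos_pos)
  then have "cmod (\<alpha> - z) < cmod (1 - cnj \<alpha> * z)"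
    by (rule power_less_imp_less_base) simp
  moreover have "cmod (1 - cnj \<alpha> * z) > 0" using da_denom[OF assms] by simp
  ultimately show ?thesis unfolding disc_aut_def by (simp add: norm_divide)
qed

lemma da_holo:
  assumes "\<alpha> \<in> ball 0 1"
  shows "disc_aut \<alpha> holomorphic_on ball 0 1"
  unfolding disc_aut_def using da_denom[OF assms] by (intro holomorphic_intros) auto

lemma da_rho:
  assumes "\<alpha> \<in> ball 0 1"
  obtains \<rho> where "0 < \<rho>" "\<rho> < 1" "\<And>z. z \<in> cball 0 (1/2) \<Longrightarrow> norm (disc_aut \<alpha> z) < \<rho>"
proof -
  have "continuous_on (ball 0 1) (disc_aut \<alpha>)"
    using da_holo[OF assms] by (rule holomorphic_on_imp_continuous_on)
  then have "continuous_on (cball 0 (1/2)) (\<lambda>z. norm (disc_aut \<alpha> z))"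
    by (intro continuous_intros) (auto elim: continuous_on_subset)
  then obtain x where x: "x \<in> cball 0 (1/2)" "\<And>y. y \<in> cball 0 (1/2) \<Longrightarrow> norm (disc_aut \<alpha> y) \<le> norm (disc_aut \<alpha> x)"
    using continuous_attains_sup[of "cball (0::complex) (1/2)"] by fastforce
  have "norm (disc_aut \<alpha> x) < 1" using x(1) assms by (intro da_in) auto
  show ?thesis
  proof (rule that[of "(1 + norm (disc_aut \<alpha> x)) / 2"])
    show "0 < (1 + norm (disc_aut \<alpha> x)) / 2" by (intro divide_pos_pos add_pos_nonneg) auto
    show "(1 + norm (disc_aut \<alpha> x)) / 2 < 1" using \<open>norm (disc_aut \<alpha> x) < 1\<close> by simp
    fix z :: complex assume "z \<in> cball 0 (1/2)"
    then have "norm (disc_aut \<alpha> z) \<le> norm (disc_aut \<alpha> x)" by (rule x(2))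
    then show "norm (disc_aut \<alpha> z) < (1 + norm (disc_aut \<alpha> x)) / 2"
      using \<open>norm (disc_aut \<alpha> x) < 1\<close> by simp
  qed
qed

lemma b_bound:
  assumes a: "\<alpha> \<in> ball 0 1" and r: "0 < \<rho>" "\<And>z. z \<in> cball 0 (1/2) \<Longrightarrow> norm (disc_aut \<alpha> z) < \<rho>"
  shows "norm (taylor_coeff (\<lambda>z. disc_aut \<alpha> z ^ m) n) \<le> 2 ^ (n+1) * \<rho> ^ m"
proof (cases "n = 0")
  case True
  have "norm (disc_aut \<alpha> 0) \<le> \<rho>" using r(2)[of 0] by simp
  then have "norm (disc_aut \<alpha> 0) ^ m \<le> \<rho> ^ m" by (intro power_mono) auto
  moreover have "\<rho> ^ m \<le> 2 * \<rho> ^ m" using r by simp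
  ultimately show ?thesis using True by (simp add: taylor_coeff_def norm_power)
next
  case False
  have hol: "(\<lambda>z. disc_aut \<alpha> z ^ m) holomorphic_on ball 0 1"
    using da_holo[OF a] by (intro holomorphic_intros)
  have "norm ((deriv ^^ n) (\<lambda>z. disc_aut \<alpha> z ^ m) 0) \<le> fact n * (2 * \<rho> ^ m) / (1/2) ^ n"
  proof (rule Cauchy_higher_deriv_bound[where y = 0])
    show "(\<lambda>z. disc_aut \<alpha> z ^ m) holomorphic_on ball 0 (1/2)"
      using hol by (rule holomorphic_on_subset) auto
    show "continuous_on (cball 0 (1/2)) (\<lambda>z. disc_aut \<alpha> z ^ m)"
      using holomorphic_on_imp_continuous_on[OF hol] by (rule continuous_on_subset) auto
    fix w :: complex assume "w \<in> ball 0 (1/2)"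
    then have "norm (disc_aut \<alpha> w) \<le> \<rho>" using r(2)[of w] by simp
    then have "norm (disc_aut \<alpha> w) ^ m \<le> \<rho> ^ m" by (intro power_mono) auto
    then show "disc_aut \<alpha> w ^ m \<in> ball 0 (2 * \<rho> ^ m)" using r(1)
      by (simp add: norm_power) (smt (verit) zero_less_power)
  qed (use False in auto)
  then have "norm ((deriv ^^ n) (\<lambda>z. disc_aut \<alpha> z ^ m) 0) / fact n \<le> 2 ^ (n+1) * \<rho> ^ m"
    by (simp add: divide_le_eq field_simps power_one_over mult.commute mult.left_commute)
  then show ?thesis by (simp add: taylor_coeff_def norm_divide)
qed

lemma hd_powi:
  fixes A c :: complex and q :: int
  assumes "1 - c * z \<noteq> 0"
  shows "(deriv ^^ k) (\<lambda>w. A * (1 - c * w) powi q) z =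
          A * (\<Prod>i<k. (of_int q - of_nat i)) * (-c) ^ k * (1 - c * z) powi (q - int k)"
  using assms
proof (induction k arbitrary: z)
  case 0
  then show ?case by simp
next
  case (Suc k)
  define S where "S = {w. 1 - c * w \<noteq> 0}"
  have S: "open S" unfolding S_def
    by (intro open_Collect_neq continuous_intros)
  have zS: "z \<in> S" using Suc.prems by (simp add: S_def)
  define P where "P = (\<Prod>i<k. (of_int q - of_nat i :: complex))"
  have "((\<lambda>w. A * P * (-c) ^ k * (1 - c * w) powi (q - int k)) has_field_derivative
        A * P * (-c) ^ k * (of_int (q - int k) * (1 - c * z) powi (q - int k - 1) * (- c))) (at z)"
    using Suc.prems by (intro derivative_eq_intros) auto
  then have "((deriv ^^ k) (\<lambda>w. A * (1 - c * w) powi q) has_field_derivative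
        A * P * (-c) ^ k * (of_int (q - int k) * (1 - c * z) powi (q - int k - 1) * (- c))) (at z)"
    by (rule has_field_derivative_transform_within_open[OF _ S zS])
       (use Suc.IH in \<open>auto simp: S_def P_def\<close>)
  then have "deriv ((deriv ^^ k) (\<lambda>w. A * (1 - c * w) powi q)) z =
        A * P * (-c) ^ k * (of_int (q - int k) * (1 - c * z) powi (q - int k - 1) * (- c))"
    by (rule DERIV_imp_deriv)
  moreover have "q - int k - 1 = q - int (Suc k)" by simp
  ultimately show ?case by (simp add: P_def algebra_simps)
qed

lemma tc_contour:
  assumes "g holomorphic_on ball 0 1"
  shows "((\<lambda>u. g u / u ^ Suc n) has_contour_integral (2*pi*\<i> * taylor_coeff g n)) (circlepath 0 (1/2))"
proof -
  have h: "g holomorphic_on ball 0 (1/2)" using assms by (rule holomorphic_on_subset) auto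
  have c: "continuous_on (cball 0 (1/2)) g"
    using holomorphic_on_imp_continuous_on[OF assms] by (rule continuous_on_subset) auto
  from Cauchy_has_contour_integral_higher_derivative_circlepath[OF c h, of 0 n]
  show ?thesis by (simp add: taylor_coeff_def)
qed

lemma interchange:
  assumes a: "\<alpha> \<in> ball 0 1" and f: "f holomorphic_on ball 0 1"
  shows "(\<lambda>m. taylor_coeff f m * taylor_coeff (\<lambda>z. disc_aut \<alpha> z ^ m) n) sums
           taylor_coeff (f \<circ> disc_aut \<alpha>) n"
proof -
  obtain \<rho> where r: "0 < \<rho>" "\<rho> < 1" "\<And>z. z \<in> cball 0 (1/2) \<Longrightarrow> norm (disc_aut \<alpha> z) < \<rho>"
    using da_rho[OF a] by blast
  define \<gamma> where "\<gamma> = circlepath (0::complex) (1/2)"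
  define h where "h m u = taylor_coeff f m * (disc_aut \<alpha> u ^ m / u ^ Suc n)" for m u
  define b where "b m = taylor_coeff (\<lambda>z. disc_aut \<alpha> z ^ m) n" for m
  have hi: "(h m has_contour_integral (taylor_coeff f m * (2*pi*\<i> * b m))) \<gamma>" for m
    unfolding h_def b_def \<gamma>_def
    by (intro has_contour_integral_lmul tc_contour holomorphic_intros da_holo a)
  have unif: "uniform_limit (sphere 0 (1/2)) (\<lambda>N u. \<Sum>m<N. h m u) (\<lambda>u. suminf (\<lambda>m. h m u)) sequentially"
  proof (rule Weierstrass_m_test)
    fix m and u :: complex assume u: "u \<in> sphere 0 (1/2)"
    have "norm (disc_aut \<alpha> u) \<le> \<rho>" using r(3)[of u] u by simp
    then have "norm (disc_aut \<alpha> u) ^ m \<le> \<rho> ^ m" by (intro power_mono) auto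
    have nu: "norm u = 1/2" using u by simp
    have "norm (h m u) = norm (taylor_coeff f m) * (norm (disc_aut \<alpha> u) ^ m * 2 ^ Suc n)"
      unfolding h_def by (simp only: norm_mult norm_divide norm_power nu) (simp add: power_one_over)
    also have "\<dots> \<le> norm (taylor_coeff f m) * (\<rho> ^ m * 2 ^ Suc n)"
      using \<open>norm (disc_aut \<alpha> u) ^ m \<le> \<rho> ^ m\<close> by (intro mult_left_mono mult_right_mono) auto
    finally have "norm (h m u) \<le> norm (taylor_coeff f m) * (\<rho> ^ m * 2 ^ Suc n)" .
    then show "norm (h m u) \<le> norm (taylor_coeff f m) * \<rho> ^ m * 2 ^ Suc n" by (simp add: mult.assoc)
  next
    show "summable (\<lambda>m. norm (taylor_coeff f m) * \<rho> ^ m * 2 ^ Suc n)"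
      using tc_abs_summable[OF f, of \<rho>] r by (intro summable_mult2) auto
  qed
  have int: "\<forall>\<^sub>F N in sequentially. (\<lambda>u. \<Sum>m<N. h m u) contour_integrable_on \<gamma>"
    using hi by (intro always_eventually allI has_contour_integral_integrable[OF has_contour_integral_sum]) auto
  from contour_integral_uniform_limit_circlepath(2)[OF int[unfolded \<gamma>_def] unif]
  have lim: "(\<lambda>N. contour_integral \<gamma> (\<lambda>u. \<Sum>m<N. h m u)) \<longlonglongrightarrow> contour_integral \<gamma> (\<lambda>u. suminf (\<lambda>m. h m u))"
    unfolding \<gamma>_def by simp
  have e1: "contour_integral \<gamma> (\<lambda>u. \<Sum>m<N. h m u) = 2*pi*\<i> * (\<Sum>m<N. taylor_coeff f m * b m)" for N
    using has_contour_integral_sum[of "{..<N}" h, OF _ hi]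
    by (simp add: contour_integral_unique sum_distrib_left mult_ac)
  have hol2: "(f \<circ> disc_aut \<alpha>) holomorphic_on ball 0 1"
    using da_holo[OF a] f da_in[OF a] by (intro holomorphic_on_compose_gen[where t = "ball 0 1"]) auto
  have e2: "contour_integral \<gamma> (\<lambda>u. suminf (\<lambda>m. h m u)) = contour_integral \<gamma> (\<lambda>u. (f \<circ> disc_aut \<alpha>) u / u ^ Suc n)"
  proof (rule contour_integral_eq)
    fix u assume "u \<in> path_image \<gamma>"
    then have u: "u \<in> sphere 0 (1/2)" unfolding \<gamma>_def by simp
    have "disc_aut \<alpha> u \<in> ball 0 1" using u a da_in by auto
    from sums_divide[OF tc_series[OF f this], of "u ^ Suc n"]
    show "suminf (\<lambda>m. h m u) = (f \<circ> disc_aut \<alpha>) u / u ^ Suc n"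
      unfolding h_def by (simp add: sums_iff times_divide_eq_right)
  qed
  have e3: "contour_integral \<gamma> (\<lambda>u. (f \<circ> disc_aut \<alpha>) u / u ^ Suc n) = 2*pi*\<i> * taylor_coeff (f \<circ> disc_aut \<alpha>) n"
    unfolding \<gamma>_def by (rule contour_integral_unique[OF tc_contour[OF hol2]])
  from lim have "(\<lambda>N. 2*pi*\<i> * (\<Sum>m<N. taylor_coeff f m * b m)) \<longlonglongrightarrow> 2*pi*\<i> * taylor_coeff (f \<circ> disc_aut \<alpha>) n"
    using e1 e2 e3 by simp
  then have "(\<lambda>N. 1/(2*pi*\<i>) * (2*pi*\<i> * (\<Sum>m<N. taylor_coeff f m * b m))) \<longlonglongrightarrow> 1/(2*pi*\<i>) * (2*pi*\<i> * taylor_coeff (f \<circ> disc_aut \<alpha>) n)"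
    by (rule tendsto_mult_left)
  then show ?thesis unfolding sums_def b_def by simp
qed

definition vcoef :: "real \<Rightarrow> complex \<Rightarrow> nat \<Rightarrow> nat \<Rightarrow> complex" where
  "vcoef b \<alpha> n m = of_real (bergman_weight b n) * cnj (taylor_coeff (\<lambda>z. disc_aut \<alpha> z ^ m) n) * of_real (iw b m)"

definition Vfun :: "real \<Rightarrow> complex \<Rightarrow> nat \<Rightarrow> complex \<Rightarrow> complex" where
  "Vfun b \<alpha> n z = (if z \<in> ball 0 1 then (\<Sum>m. vcoef b \<alpha> n m * z ^ m) else 0)"

lemma vcoef_bound:
  assumes b: "b \<ge> 0" and a: "\<alpha> \<in> ball 0 1" and r: "0 < \<rho>" "\<And>z. z \<in> cball 0 (1/2) \<Longrightarrow> norm (disc_aut \<alpha> z) < \<rho>"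
  shows "norm (vcoef b \<alpha> n m) \<le> bergman_weight b n * 2 ^ (n+1) * (\<rho> ^ m * iw b m)"
proof -
  have "norm (vcoef b \<alpha> n m) = bergman_weight b n * norm (taylor_coeff (\<lambda>z. disc_aut \<alpha> z ^ m) n) * iw b m"
    unfolding vcoef_def using bw_pos[OF b, of n] iw_pos[OF b, of m] by (simp add: norm_mult)
  also have "\<dots> \<le> bergman_weight b n * (2 ^ (n+1) * \<rho> ^ m) * iw b m"
    using b_bound[OF a r, of m n] bw_pos[OF b, of n] iw_pos[OF b, of m]
    by (intro mult_right_mono mult_left_mono) auto
  finally show ?thesis by (simp add: mult_ac)
qed

lemma V_sums:
  assumes b: "b \<ge> 0" and a: "\<alpha> \<in> ball 0 1" and w: "w \<in> ball 0 1"
  shows "(\<lambda>m. vcoef b \<alpha> n m * w ^ m) sums Vfun b \<alpha> n w"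
proof -
  obtain \<rho> where r: "0 < \<rho>" "\<rho> < 1" "\<And>z. z \<in> cball 0 (1/2) \<Longrightarrow> norm (disc_aut \<alpha> z) < \<rho>"
    using da_rho[OF a] by blast
  have "summable (\<lambda>m. vcoef b \<alpha> n m * w ^ m)"
  proof (rule summable_comparison_test')
    show "summable (\<lambda>m. bergman_weight b n * 2 ^ (n+1) * (\<rho> ^ m * iw b m))"
      using summable_iw[OF b, of \<rho>] r by (intro summable_mult) auto
    fix m
    have "norm (w ^ m) \<le> 1" using w by (simp add: norm_power power_le_one)
    then have "norm (vcoef b \<alpha> n m * w ^ m) \<le> norm (vcoef b \<alpha> n m) * 1"
      unfolding norm_mult by (intro mult_left_mono) auto
    also have "\<dots> \<le> bergman_weight b n * 2 ^ (n+1) * (\<rho> ^ m * iw b m)"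
      using vcoef_bound[OF b a r(1,3)] by simp
    finally show "norm (vcoef b \<alpha> n m * w ^ m) \<le> bergman_weight b n * 2 ^ (n+1) * (\<rho> ^ m * iw b m)" .
  qed
  then show ?thesis using w unfolding Vfun_def by (simp add: summable_sums)
qed

lemma V_holo:
  assumes b: "b \<ge> 0" and a: "\<alpha> \<in> ball 0 1"
  shows "Vfun b \<alpha> n holomorphic_on ball 0 1"
  by (rule power_series_holomorphic[where a = "vcoef b \<alpha> n"]) (use V_sums[OF b a] in simp)

lemma V_tc:
  assumes b: "b \<ge> 0" and a: "\<alpha> \<in> ball 0 1"
  shows "taylor_coeff (Vfun b \<alpha> n) m = vcoef b \<alpha> n m"
  by (rule tc_sums[of 1]) (use V_sums[OF b a] in auto)

lemma V_A2:
  assumes b: "b \<ge> 0" and a: "\<alpha> \<in> ball 0 1"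
  shows "Vfun b \<alpha> n \<in> A2 b"
proof -
  obtain \<rho> where r: "0 < \<rho>" "\<rho> < 1" "\<And>z. z \<in> cball 0 (1/2) \<Longrightarrow> norm (disc_aut \<alpha> z) < \<rho>"
    using da_rho[OF a] by blast
  define C where "C = bergman_weight b n * 2 ^ (n+1)"
  have C: "C \<ge> 0" unfolding C_def using bw_pos[OF b, of n] by simp
  have "summable (\<lambda>m. bergman_weight b m * (cmod (vcoef b \<alpha> n m))\<^sup>2)"
  proof (rule summable_comparison_test')
    show "summable (\<lambda>m. C^2 * ((\<rho>^2) ^ m * iw b m))"
      using summable_iw[OF b, of "\<rho>^2"] r by (intro summable_mult) (auto simp: power_less_one_iff abs_square_less_1)
    fix m
    have bw: "bergman_weight b m * iw b m = 1" using bw_iw[OF b] iw_pos[OF b, of m] by simp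
    have vb: "cmod (vcoef b \<alpha> n m) \<le> C * (\<rho> ^ m * iw b m)"
      using vcoef_bound[OF b a r(1,3)] by (simp add: C_def)
    have "(cmod (vcoef b \<alpha> n m))\<^sup>2 \<le> (C * (\<rho> ^ m * iw b m))\<^sup>2"
      using vb by (intro power_mono) auto
    then have "bergman_weight b m * (cmod (vcoef b \<alpha> n m))\<^sup>2 \<le> bergman_weight b m * (C * (\<rho> ^ m * iw b m))\<^sup>2"
      using bw_pos[OF b, of m] by (intro mult_left_mono) auto
    also have "\<dots> = C^2 * ((\<rho>^2) ^ m * iw b m) * (bergman_weight b m * iw b m)"
      by (simp add: power2_eq_square power_mult_distrib algebra_simps flip: power_mult)
    also have "\<dots> = C^2 * ((\<rho>^2) ^ m * iw b m)" using bw by simp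
    finally show "norm (bergman_weight b m * (cmod (vcoef b \<alpha> n m))\<^sup>2) \<le> C^2 * ((\<rho>^2) ^ m * iw b m)"
      using bw_pos[OF b, of m] by simp
  qed
  then show ?thesis unfolding A2_def using V_holo[OF b a] V_tc[OF b a] by simp
qed

lemma inner_power:
  "A2_inner b (\<lambda>z. z ^ k) u = of_real (bergman_weight b k) * cnj (taylor_coeff u k)"
proof -
  have eq: "(\<lambda>m. of_real (bergman_weight b m) * taylor_coeff (\<lambda>z. z ^ k) m * cnj (taylor_coeff u m)) =
        (\<lambda>m. if m = k then of_real (bergman_weight b m) * cnj (taylor_coeff u m) else 0)"
    by (auto simp: tc_power)
  have s: "(\<lambda>m. of_real (bergman_weight b m) * taylor_coeff (\<lambda>z. z ^ k) m * cnj (taylor_coeff u m)) sums (of_real (bergman_weight b k) * cnj (taylor_coeff u k))"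
    unfolding eq using sums_single[of k "\<lambda>m. of_real (bergman_weight b m) * cnj (taylor_coeff u m)"] by simp
  show ?thesis unfolding A2_inner_def using s by (rule sums_unique[symmetric])
qed

lemma inner_power2:
  "A2_inner b u (\<lambda>z. z ^ k) = of_real (bergman_weight b k) * taylor_coeff u k"
proof -
  have eq: "(\<lambda>m. of_real (bergman_weight b m) * taylor_coeff u m * cnj (taylor_coeff (\<lambda>z. z ^ k) m)) =
        (\<lambda>m. if m = k then of_real (bergman_weight b m) * taylor_coeff u m else 0)"
    by (auto simp: tc_power)
  have s: "(\<lambda>m. of_real (bergman_weight b m) * taylor_coeff u m * cnj (taylor_coeff (\<lambda>z. z ^ k) m)) sums (of_real (bergman_weight b k) * taylor_coeff u k)"
    unfolding eq using sums_single[of k "\<lambda>m. of_real (bergman_weight b m) * taylor_coeff u m"] by simp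
  show ?thesis unfolding A2_inner_def using s by (rule sums_unique[symmetric])
qed

lemma power_A2: "(\<lambda>z. z ^ k) \<in> A2 b"
proof -
  have "(\<lambda>m. bergman_weight b m * (cmod (taylor_coeff (\<lambda>z. z ^ k) m))\<^sup>2) =
        (\<lambda>m. if m = k then bergman_weight b m else 0)"
    by (auto simp: tc_power)
  then have "summable (\<lambda>m. bergman_weight b m * (cmod (taylor_coeff (\<lambda>z. z ^ k) m))\<^sup>2)"
    using sums_summable[OF sums_single[of k "\<lambda>m. bergman_weight b m"]] by simp
  then show ?thesis unfolding A2_def by (auto intro: holomorphic_intros)
qed

lemma comp_adj_eq:
  assumes b: "b \<ge> 0" and V: "V \<in> A2 b" "\<forall>z. z \<notin> ball 0 1 \<longrightarrow> V z = 0"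
    "\<forall>f\<in>A2 b. A2_inner b (comp_op \<phi> f) g = A2_inner b f V"
  shows "comp_adj b \<phi> g = V"
  unfolding comp_adj_def
proof (rule the_equality)
  show "V \<in> A2 b \<and> (\<forall>z. z \<notin> ball 0 1 \<longrightarrow> V z = 0) \<and> (\<forall>f\<in>A2 b. A2_inner b (comp_op \<phi> f) g = A2_inner b f V)"
    using V by blast
  fix u assume u: "u \<in> A2 b \<and> (\<forall>z. z \<notin> ball 0 1 \<longrightarrow> u z = 0) \<and> (\<forall>f\<in>A2 b. A2_inner b (comp_op \<phi> f) g = A2_inner b f u)"
  have tc: "taylor_coeff u k = taylor_coeff V k" for k
  proof -
    have "A2_inner b (\<lambda>z. z ^ k) u = A2_inner b (\<lambda>z. z ^ k) V"
      using u V(3) power_A2[of k b] by simp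
    then have "of_real (bergman_weight b k) * cnj (taylor_coeff u k) = of_real (bergman_weight b k) * cnj (taylor_coeff V k)"
      by (simp add: inner_power)
    then show ?thesis using bw_pos[OF b, of k] by simp
  qed
  have hu: "u holomorphic_on ball 0 1" and hV: "V holomorphic_on ball 0 1"
    using u V(1) unfolding A2_def by auto
  show "u = V"
  proof
    fix z show "u z = V z"
    proof (cases "z \<in> ball 0 1")
      case True
      from tc_series[OF hu True] tc_series[OF hV True] show ?thesis
        by (simp add: tc sums_unique2)
    next
      case False then show ?thesis using u V(2) by auto
    qed
  qed
qed

lemma V_adj:
  assumes b: "b \<ge> 0" and a: "\<alpha> \<in> ball 0 1" and f: "f \<in> A2 b"
  shows "A2_inner b (comp_op (disc_aut \<alpha>) f) (\<lambda>z. z ^ n) = A2_inner b f (Vfun b \<alpha> n)"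
proof -
  have hf: "f holomorphic_on ball 0 1" using f unfolding A2_def by auto
  have s: "(\<lambda>m. of_real (bergman_weight b n) * (taylor_coeff f m * taylor_coeff (\<lambda>z. disc_aut \<alpha> z ^ m) n)) sums
          (of_real (bergman_weight b n) * taylor_coeff (f \<circ> disc_aut \<alpha>) n)"
    by (intro sums_mult interchange a hf)
  have eqm: "of_real (bergman_weight b m) * taylor_coeff f m * cnj (taylor_coeff (Vfun b \<alpha> n) m) =
     of_real (bergman_weight b n) * (taylor_coeff f m * taylor_coeff (\<lambda>z. disc_aut \<alpha> z ^ m) n)" for m
  proof -
    have bw: "bergman_weight b m * iw b m = 1" using bw_iw[OF b] iw_pos[OF b, of m] by simp
    have BI: "complex_of_real (bergman_weight b m) * complex_of_real (iw b m) = 1"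
      using bw by (simp flip: of_real_mult)
    have "of_real (bergman_weight b m) * taylor_coeff f m * cnj (vcoef b \<alpha> n m) =
      of_real (bergman_weight b n) * (taylor_coeff f m * taylor_coeff (\<lambda>z. disc_aut \<alpha> z ^ m) n) *
      (complex_of_real (bergman_weight b m) * complex_of_real (iw b m))"
      unfolding vcoef_def by (simp add: mult_ac)
    then show ?thesis unfolding V_tc[OF b a] BI by simp
  qed
  have "A2_inner b f (Vfun b \<alpha> n) = of_real (bergman_weight b n) * taylor_coeff (f \<circ> disc_aut \<alpha>) n"
    unfolding A2_inner_def by (simp only: eqm) (rule sums_unique[symmetric, OF s])
  then show ?thesis by (simp add: inner_power2 comp_op_def)
qed

lemma prodneg:
  "(\<Prod>i<m. (of_int (- int p) - of_nat i :: complex)) * (-c) ^ m = pochhammer (of_nat p) m * c ^ m"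
proof (induction m)
  case 0 then show ?case by simp
next
  case (Suc m)
  have "(\<Prod>i<Suc m. (of_int (- int p) - of_nat i :: complex)) * (-c) ^ Suc m =
        ((\<Prod>i<m. (of_int (- int p) - of_nat i :: complex)) * (-c) ^ m) * ((of_nat p + of_nat m) * c)"
    by (simp add: algebra_simps)
  also have "\<dots> = pochhammer (of_nat p) (Suc m) * c ^ Suc m"
    using Suc.IH by (simp add: pochhammer_Suc algebra_simps)
  finally show ?case .
qed

definition Kf :: "complex \<Rightarrow> nat \<Rightarrow> complex \<Rightarrow> complex" where
  "Kf \<alpha> p z = 1 * (1 - cnj \<alpha> * z) powi (- int p)"

lemma K_holo:
  assumes a: "\<alpha> \<in> ball 0 1"
  shows "Kf \<alpha> p holomorphic_on ball 0 1"
  unfolding Kf_def using da_denom[OF a] by (intro holomorphic_intros) auto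

lemma K_tc:
  "taylor_coeff (Kf \<alpha> (\<beta> + 2)) m = cnj \<alpha> ^ m * of_real (iw (real \<beta>) m)"
proof -
  have "(deriv ^^ m) (Kf \<alpha> (\<beta>+2)) 0 = 1 * (\<Prod>i<m. (of_int (- int (\<beta>+2)) - of_nat i :: complex)) * (- cnj \<alpha>) ^ m * (1 - cnj \<alpha> * 0) powi (- int (\<beta>+2) - int m)"
    unfolding Kf_def by (rule hd_powi) simp
  also have "\<dots> = (\<Prod>i<m. (of_int (- int (\<beta>+2)) - of_nat i :: complex)) * (- cnj \<alpha>) ^ m"
    by (simp only: mult_zero_right diff_zero power_int_1_left mult_1_left mult_1_right)
  also have "\<dots> = pochhammer (of_nat (\<beta>+2)) m * cnj \<alpha> ^ m" by (rule prodneg)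
  finally have "(deriv ^^ m) (Kf \<alpha> (\<beta>+2)) 0 = pochhammer (of_nat (\<beta>+2)) m * cnj \<alpha> ^ m" .
  moreover have "pochhammer (of_nat (\<beta>+2) :: complex) m = of_real (pochhammer (2 + real \<beta>) m)"
    by (metis add.commute of_nat_add of_nat_numeral of_real_of_nat_eq pochhammer_of_real of_real_numeral of_real_add)
  ultimately show ?thesis unfolding taylor_coeff_def iw_def by (simp add: field_simps)
qed

lemma KC_zero:
  assumes a: "\<alpha> \<in> ball 0 1" and n: "n > \<beta> + 2"
  shows "taylor_coeff (Kf \<alpha> (\<beta> + 2) \<circ> disc_aut \<alpha>) n = 0"
proof -
  define c where "c = cnj \<alpha>"
  define A where "A = (1 - c * \<alpha>) powi (- int (\<beta>+2))"
  have eq: "(Kf \<alpha> (\<beta> + 2) \<circ> disc_aut \<alpha>) z = A * (1 - c * z) powi (int (\<beta>+2))" if z: "z \<in> ball 0 1" for z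
  proof -
    have d: "1 - c * z \<noteq> 0" using da_denom[OF a z] by (simp add: c_def)
    have "1 - c * disc_aut \<alpha> z = (1 - c * \<alpha>) / (1 - c * z)"
      unfolding disc_aut_def c_def[symmetric] using d by (simp add: field_simps)
    have "(Kf \<alpha> (\<beta> + 2) \<circ> disc_aut \<alpha>) z = (1 - c * disc_aut \<alpha> z) powi (- int (\<beta>+2))"
      unfolding Kf_def c_def by simp
    also have "\<dots> = ((1 - c * \<alpha>) / (1 - c * z)) powi (- int (\<beta>+2))"
      using \<open>1 - c * disc_aut \<alpha> z = _\<close> by (simp only:)
    also have "\<dots> = A * (1 - c * z) powi (int (\<beta>+2))"
      unfolding A_def power_int_divide_distrib power_int_minus using d by (simp add: field_simps)
    finally show ?thesis .
  qed
  have "taylor_coeff (Kf \<alpha> (\<beta> + 2) \<circ> disc_aut \<alpha>) n = taylor_coeff (\<lambda>z. A * (1 - c * z) powi (int (\<beta>+2))) n"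
    by (rule tc_cong[of 1]) (use eq in auto)
  also have "\<dots> = 0"
  proof -
    have "(\<Prod>i<n. (of_int (int (\<beta>+2)) - of_nat i :: complex)) = 0"
      using n by (intro prod_zero) (auto intro!: bexI[of _ "\<beta>+2"])
    then show ?thesis unfolding taylor_coeff_def using hd_powi[of c 0 n A "int (\<beta>+2)"] by simp
  qed
  finally show ?thesis .
qed

theorem lemma5p1:
  fixes \<beta> n :: nat and \<alpha> :: complex
  assumes "\<alpha> \<in> ball 0 1" and "\<alpha> \<noteq> 0" and "n > 2 + \<beta>"
  shows "A2_inner (real \<beta>) (comp_adj (real \<beta>) (disc_aut \<alpha>) (\<lambda>z. z ^ n))
                            (comp_adj (real \<beta>) (disc_aut \<alpha>) (\<lambda>z. z ^ 0)) = 0"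
proof -
  note a = assms(1)
  have b: "real \<beta> \<ge> 0" by simp
  have adj: "comp_adj (real \<beta>) (disc_aut \<alpha>) (\<lambda>z. z ^ k) = Vfun (real \<beta>) \<alpha> k" for k
    by (rule comp_adj_eq[OF b V_A2[OF b a]]) (auto simp: Vfun_def intro: V_adj[OF b a])
  define W where "W = complex_of_real (bergman_weight (real \<beta>) n)"
  define bn where "bn m = taylor_coeff (\<lambda>z. disc_aut \<alpha> z ^ m) n" for m
  have bw0: "bergman_weight (real \<beta>) 0 = 1" using bw_iw[OF b, of 0] by (simp add: iw_def)
  have tc0: "taylor_coeff (Vfun (real \<beta>) \<alpha> 0) m = cnj \<alpha> ^ m * of_real (iw (real \<beta>) m)" for m
    unfolding V_tc[OF b a] vcoef_def bw0 by (simp add: taylor_coeff_def disc_aut_def)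
  have s0: "(\<lambda>m. taylor_coeff (Kf \<alpha> (\<beta> + 2)) m * bn m) sums taylor_coeff (Kf \<alpha> (\<beta> + 2) \<circ> disc_aut \<alpha>) n"
    unfolding bn_def by (rule interchange[OF a K_holo[OF a]])
  have n': "n > \<beta> + 2" using assms(3) by simp
  have "(\<lambda>m. cnj \<alpha> ^ m * of_real (iw (real \<beta>) m) * bn m) sums 0"
    using s0[unfolded K_tc KC_zero[OF a n']] .
  then have "(\<lambda>m. W * (cnj \<alpha> ^ m * of_real (iw (real \<beta>) m) * bn m)) sums (W * 0)"
    by (rule sums_mult)
  then have s: "(\<lambda>m. cnj (W * (cnj \<alpha> ^ m * of_real (iw (real \<beta>) m) * bn m))) sums 0"
    using sums_cnj[of "\<lambda>m. W * (cnj \<alpha> ^ m * of_real (iw (real \<beta>) m) * bn m)" 0] by simp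
  have eqm: "of_real (bergman_weight (real \<beta>) m) * taylor_coeff (Vfun (real \<beta>) \<alpha> n) m *
               cnj (taylor_coeff (Vfun (real \<beta>) \<alpha> 0) m) =
             cnj (W * (cnj \<alpha> ^ m * of_real (iw (real \<beta>) m) * bn m))" for m
  proof -
    have BI: "complex_of_real (bergman_weight (real \<beta>) m) * complex_of_real (iw (real \<beta>) m) = 1"
      using bw_iw[OF b, of m] iw_pos[OF b, of m] by (simp flip: of_real_mult)
    have "of_real (bergman_weight (real \<beta>) m) * taylor_coeff (Vfun (real \<beta>) \<alpha> n) m *
               cnj (taylor_coeff (Vfun (real \<beta>) \<alpha> 0) m) =
          cnj (W * (cnj \<alpha> ^ m * of_real (iw (real \<beta>) m) * bn m)) *
          (complex_of_real (bergman_weight (real \<beta>) m) * complex_of_real (iw (real \<beta>) m))"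
      unfolding tc0 unfolding V_tc[OF b a] vcoef_def W_def bn_def by (simp add: mult_ac)
    then show ?thesis unfolding BI by simp
  qed
  show ?thesis unfolding adj A2_inner_def
    by (simp only: eqm) (rule sums_unique[symmetric, OF s])
qed

end
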